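(* For every $T\ge0$ and $\vec\pi\in D$, the map $x\mapsto\hat u(x,T,\vec\pi)$ is convex on $[0,\infty)$.
   Context: Let $M$ be a continuous-time Markov chain on $E=\{1,\dots,m\}$ with generator $Q$. Let $N^{(1)},\dots,N^{(m)}$ be independent compound Poisson processes, independent of $M$, with intensities $\lambda_i>0$ and jump-size distributions $\nu_i$; the observed order flow is $N_t=\int_0^t\sum_i1_{\{M_s=i\}}dN^{(i)}_s$ with arrival times $\sigma_1<\sigma_2<\cdots$, and $\mathcal F^N$ is its natural filtration. Let $D=\{\vec\pi\in[0,1]^m:\sum_i\pi_i=1\}$ and $\mathbb P^{\vec\pi}=\sum_i\pi_i\mathbb P(\cdot\mid M_0=i)$. Let $F:[0,\infty)\to[0,\infty)$ be strictly increasing and strictly convex. For $x\ge0$, $\mathcal A^c_x$ is the set of $\mathcal F^N$-adapted, real-valued, nonnegative, non-increasing processes $\xi$ with $\xi_0=x$ whose values change only at arrival times of $N$, and $\hat u(x,T,\vec\pi)=\inf_{\xi\in\mathcal A^c_x}\mathbb E^{\vec\pi}[\sum_{i:\sigma_i\le T}F(\xi_{\sigma_i-}-\xi_{\sigma_i})+F(\xi_T)]$. *)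

theory Defs
  imports "HOL-Probability.Probability"
begin

definition strictly_convex_on :: "real set \<Rightarrow> (real \<Rightarrow> real) \<Rightarrow> bool" where
  "strictly_convex_on S f \<longleftrightarrow>
     (\<forall>x\<in>S. \<forall>y\<in>S. \<forall>a::real. x \<noteq> y \<longrightarrow> 0 < a \<longrightarrow> a < 1 \<longrightarrow>
        f (a * x + (1 - a) * y) < a * f x + (1 - a) * f y)"

primrec mat_pow :: "('e::finite \<Rightarrow> 'e \<Rightarrow> real) \<Rightarrow> nat \<Rightarrow> 'e \<Rightarrow> 'e \<Rightarrow> real" where
  "mat_pow Q 0 = (\<lambda>i j. if i = j then 1 else 0)"
| "mat_pow Q (Suc k) = (\<lambda>i j. \<Sum>l\<in>UNIV. mat_pow Q k i l * Q l j)"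

definition trans_mat :: "('e::finite \<Rightarrow> 'e \<Rightarrow> real) \<Rightarrow> real \<Rightarrow> 'e \<Rightarrow> 'e \<Rightarrow> real" where
  "trans_mat Q t i j = (\<Sum>k. t ^ k / fact k * mat_pow Q k i j)"

definition is_generator :: "('e::finite \<Rightarrow> 'e \<Rightarrow> real) \<Rightarrow> bool" where
  "is_generator Q \<longleftrightarrow> (\<forall>i j. i \<noteq> j \<longrightarrow> 0 \<le> Q i j) \<and> (\<forall>i. (\<Sum>j\<in>UNIV. Q i j) = 0)"

text \<open>M is a continuous-time Markov chain with generator Q and initial law p0
  (cadlag paths, finite-dimensional distributions given by exp(tQ)).\<close>
definition ctmc :: "'a measure \<Rightarrow> (real \<Rightarrow> 'a \<Rightarrow> 'e::finite) \<Rightarrow> ('e \<Rightarrow> 'e \<Rightarrow> real) \<Rightarrow> ('e \<Rightarrow> real) \<Rightarrow> bool" where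
  "ctmc P M Q p0 \<longleftrightarrow>
     (\<forall>t. M t \<in> measurable P (count_space UNIV)) \<and>
     (\<forall>\<omega> t. 0 \<le> t \<longrightarrow> (\<exists>\<epsilon>>0. \<forall>s\<in>{t..<t+\<epsilon>}. M s \<omega> = M t \<omega>)) \<and>
     (\<forall>\<omega> t. 0 < t \<longrightarrow> (\<exists>\<epsilon>>0. \<exists>i. \<forall>s\<in>{t-\<epsilon><..<t}. M s \<omega> = i)) \<and>
     (\<forall>(n::nat) (t::nat \<Rightarrow> real) (s::nat \<Rightarrow> 'e). 0 \<le> t 0 \<longrightarrow> (\<forall>k<n. t k \<le> t (Suc k)) \<longrightarrow>
        measure P {\<omega>\<in>space P. \<forall>k\<le>n. M (t k) \<omega> = s k} =
        (\<Sum>i\<in>UNIV. p0 i * trans_mat Q (t 0) i (s 0)) *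
        (\<Prod>k<n. trans_mat Q (t (Suc k) - t k) (s k) (s (Suc k))))"

definition compound_poisson :: "'a measure \<Rightarrow> real \<Rightarrow> real measure \<Rightarrow> (real \<Rightarrow> 'a \<Rightarrow> real) \<Rightarrow> bool" where
  "compound_poisson P lam nu X \<longleftrightarrow>
     (\<forall>t. X t \<in> borel_measurable P) \<and>
     (\<exists>(S::nat \<Rightarrow> 'a \<Rightarrow> real) (Y::nat \<Rightarrow> 'a \<Rightarrow> real).
        (\<forall>k. S k \<in> borel_measurable P) \<and> (\<forall>k. Y k \<in> borel_measurable P) \<and>
        (\<forall>\<omega>. S 0 \<omega> = 0) \<and>
        prob_space.indep_vars P (\<lambda>_. borel)
          (\<lambda>k \<omega>. case k of Inl n \<Rightarrow> S (Suc n) \<omega> - S n \<omega> | Inr n \<Rightarrow> Y n \<omega>) UNIV \<and>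
        (\<forall>n. distributed P lborel (\<lambda>\<omega>. S (Suc n) \<omega> - S n \<omega>) (exponential_density lam)) \<and>
        (\<forall>n. distr P borel (Y n) = nu) \<and>
        (AE \<omega> in P. \<forall>t\<ge>0. X t \<omega> = (\<Sum>k\<in>{k. 1 \<le> k \<and> S k \<omega> \<le> t}. Y k \<omega>)))"

definition left_lim :: "(real \<Rightarrow> real) \<Rightarrow> real \<Rightarrow> real" where
  "left_lim f s = Lim (at_left s) f"

definition jump_times :: "(real \<Rightarrow> real) \<Rightarrow> real set" where
  "jump_times f = {s. 0 < s \<and> f s \<noteq> left_lim f s}"

text \<open>N_t = int_0^t sum_i 1{M_s = i} dN^(i)_s (pathwise Stieltjes integral of piecewise constant paths).\<close>
definition observed :: "(real \<Rightarrow> 'a \<Rightarrow> 'e::finite) \<Rightarrow> ('e \<Rightarrow> real \<Rightarrow> 'a \<Rightarrow> real) \<Rightarrow> real \<Rightarrow> 'a \<Rightarrow> real" where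
  "observed M Nc t \<omega> =
     (\<Sum>i\<in>UNIV. \<Sum>s\<in>jump_times (\<lambda>r. Nc i r \<omega>) \<inter> {0<..t}.
        if M s \<omega> = i then Nc i s \<omega> - left_lim (\<lambda>r. Nc i r \<omega>) s else 0)"

definition nat_filt :: "'a measure \<Rightarrow> (real \<Rightarrow> 'a \<Rightarrow> real) \<Rightarrow> real \<Rightarrow> 'a measure" where
  "nat_filt P X t = sigma (space P)
     {X s -` B \<inter> space P | s B. 0 \<le> s \<and> s \<le> t \<and> B \<in> sets borel}"

definition admissible :: "'a measure \<Rightarrow> (real \<Rightarrow> 'a \<Rightarrow> real) \<Rightarrow> real \<Rightarrow> (real \<Rightarrow> 'a \<Rightarrow> real) \<Rightarrow> bool" where
  "admissible P X x \<xi> \<longleftrightarrow>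
     (\<forall>t\<ge>0. \<xi> t \<in> borel_measurable (nat_filt P X t)) \<and>
     (\<forall>\<omega>\<in>space P.
        \<xi> 0 \<omega> = x \<and>
        (\<forall>t\<ge>0. 0 \<le> \<xi> t \<omega>) \<and>
        (\<forall>s t. 0 \<le> s \<longrightarrow> s \<le> t \<longrightarrow> \<xi> t \<omega> \<le> \<xi> s \<omega>) \<and>
        (\<forall>s t. 0 \<le> s \<longrightarrow> s \<le> t \<longrightarrow> {s<..t} \<inter> jump_times (\<lambda>r. X r \<omega>) = {} \<longrightarrow> \<xi> t \<omega> = \<xi> s \<omega>))"

definition exec_cost :: "(real \<Rightarrow> 'a \<Rightarrow> real) \<Rightarrow> (real \<Rightarrow> real) \<Rightarrow> real \<Rightarrow> (real \<Rightarrow> 'a \<Rightarrow> real) \<Rightarrow> 'a \<Rightarrow> real" where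
  "exec_cost X F T \<xi> \<omega> =
     (\<Sum>s\<in>jump_times (\<lambda>r. X r \<omega>) \<inter> {0<..T}. F (left_lim (\<lambda>r. \<xi> r \<omega>) s - \<xi> s \<omega>)) + F (\<xi> T \<omega>)"

definition value_fn :: "'a measure \<Rightarrow> (real \<Rightarrow> 'a \<Rightarrow> real) \<Rightarrow> (real \<Rightarrow> real) \<Rightarrow> real \<Rightarrow> real \<Rightarrow> ennreal" where
  "value_fn P X F T x = (INF \<xi>\<in>{\<xi>. admissible P X x \<xi>}. \<integral>\<^sup>+ \<omega>. ennreal (exec_cost X F T \<xi> \<omega>) \<partial>P)"

end

theory Submission
  imports Defs
begin

definition pc :: "(real \<Rightarrow> real) \<Rightarrow> real set \<Rightarrow> real \<Rightarrow> bool" where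
  "pc f J t \<longleftrightarrow> finite J \<and> (\<forall>u v. 0 \<le> u \<longrightarrow> u \<le> v \<longrightarrow> v \<le> t \<longrightarrow> {u<..v} \<inter> J = {} \<longrightarrow> f v = f u)"

lemma pcD: "pc f J t \<Longrightarrow> 0 \<le> u \<Longrightarrow> u \<le> v \<Longrightarrow> v \<le> t \<Longrightarrow> {u<..v} \<inter> J = {} \<Longrightarrow> f v = f u"
  unfolding pc_def by blast

lemma pc_fin: "pc f J t \<Longrightarrow> finite J"
  unfolding pc_def by blast

lemma left_lim_eq:
  assumes "w < s" "\<And>r. w < r \<Longrightarrow> r < s \<Longrightarrow> f r = c"
  shows "left_lim f s = c"
proof -
  have "eventually (\<lambda>r. f r = c) (at_left s)"
    by (rule eventually_mono[OF eventually_at_left_real[OF assms(1)]]) (use assms(2) in auto)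
  then have "(f \<longlongrightarrow> c) (at_left s)"
    by (rule tendsto_eventually)
  then show ?thesis unfolding left_lim_def
    by (intro tendsto_Lim) (auto simp: trivial_limit_at_left_real)
qed

lemma pc_left:
  assumes "pc f J t" "0 < s" "s \<le> t"
  obtains w where "0 \<le> w" "w < s" "{w<..<s} \<inter> J = {}" "\<And>r. w \<le> r \<Longrightarrow> r < s \<Longrightarrow> f r = f w" "left_lim f s = f w"
proof -
  have fin: "finite J" using assms(1) by (simp add: pc_def)
  define w where "w = Max ({0} \<union> {x\<in>J. x < s})"
  have fw: "finite ({0} \<union> {x\<in>J. x < s})" using fin by auto
  have w0: "0 \<le> w" unfolding w_def using fw by (intro Max_ge) auto
  have ws: "w < s" unfolding w_def using fw assms(2) by (subst Max_less_iff) auto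
  have free: "{w<..<s} \<inter> J = {}"
  proof (rule ccontr)
    assume "{w<..<s} \<inter> J \<noteq> {}"
    then obtain x where x: "x \<in> J" "w < x" "x < s" by auto
    then have "x \<le> w" unfolding w_def using fw by (intro Max_ge) auto
    with x show False by simp
  qed
  have c: "f r = f w" if "w \<le> r" "r < s" for r
  proof -
    have "{w<..r} \<inter> J = {}" using free that
      by (metis (no_types, lifting) disjoint_iff greaterThanAtMost_iff greaterThanLessThan_iff le_less_trans)
    moreover have "r \<le> t" using that assms(3) by simp
    ultimately show ?thesis using pcD[OF assms(1) w0 that(1)] by blast
  qed
  have "left_lim f s = f w" by (rule left_lim_eq[OF ws], rule c) auto
  show ?thesis by (rule that[OF w0 ws free c \<open>left_lim f s = f w\<close>])
qed

lemma pc_right: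
  assumes "pc f J t" "0 \<le> s"
  shows "\<exists>e>0. \<forall>b. s \<le> b \<longrightarrow> b \<le> t \<longrightarrow> b < s + e \<longrightarrow> f b = f s"
proof -
  have fin: "finite J" using assms(1) by (simp add: pc_def)
  define e where "e = Min ({1} \<union> (\<lambda>x. x - s) ` {x\<in>J. s < x})"
  have fe: "finite ({1} \<union> (\<lambda>x. x - s) ` {x\<in>J. s < x})" using fin by auto
  have e0: "0 < e" unfolding e_def using fe by (subst Min_gr_iff) auto
  have "f b = f s" if "s \<le> b" "b \<le> t" "b < s + e" for b
  proof -
    have "{s<..b} \<inter> J = {}"
    proof (rule ccontr)
      assume "{s<..b} \<inter> J \<noteq> {}"
      then obtain x where x: "x \<in> J" "s < x" "x \<le> b" by auto
      then have "e \<le> x - s" unfolding e_def using fe by (intro Min_le) auto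
      with x that show False by simp
    qed
    then show ?thesis using pcD[OF assms(1) assms(2) that(1) that(2)] by blast
  qed
  with e0 show ?thesis by blast
qed

lemma pc_jumps:
  assumes "pc f J t"
  shows "jump_times f \<inter> {0<..t} \<subseteq> J"
proof
  fix s assume s: "s \<in> jump_times f \<inter> {0<..t}"
  show "s \<in> J"
  proof (rule ccontr)
    assume "s \<notin> J"
    have s0: "0 < s" "s \<le> t" using s by auto
    obtain w where w: "0 \<le> w" "w < s" "{w<..<s} \<inter> J = {}" "left_lim f s = f w"
      by (rule pc_left[OF assms s0])
    have "{w<..s} \<inter> J = {}" using w(3) \<open>s \<notin> J\<close> by (auto simp: disjoint_iff) (metis order_le_less)
    then have "f s = f w" using pcD[OF assms w(1) _ s0(2)] w(2) by simp
    with w s show False by (simp add: jump_times_def)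
  qed
qed

lemma pc_reduce:
  assumes "pc f J t"
  shows "pc f (jump_times f \<inter> {0<..t}) t"
proof -
  have fin: "finite J" using assms(1) by (simp add: pc_def)
  have main: "\<forall>v. card (J \<inter> {u<..v}) = n \<longrightarrow> u \<le> v \<longrightarrow> v \<le> t \<longrightarrow> {u<..v} \<inter> (jump_times f \<inter> {0<..t}) = {} \<longrightarrow> f v = f u"
    if u0: "0 \<le> u" for u n
  proof (induction n rule: less_induct)
    case (less n)
    show ?case
    proof (intro allI impI)
      fix v assume cn: "card (J \<inter> {u<..v}) = n" and uv: "u \<le> v" and vt: "v \<le> t"
        and fr: "{u<..v} \<inter> (jump_times f \<inter> {0<..t}) = {}"
      show "f v = f u"
      proof (cases "J \<inter> {u<..v} = {}")
        case True
        then show ?thesis using pcD[OF assms u0 uv vt] by (simp add: Int_commute)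
      next
        case False
        define s where "s = Max (J \<inter> {u<..v})"
        have fJ: "finite (J \<inter> {u<..v})" using fin by auto
        have sJ: "s \<in> J \<inter> {u<..v}" unfolding s_def using fJ False by (rule Max_in)
        have sm: "x \<le> s" if "x \<in> J \<inter> {u<..v}" for x unfolding s_def using fJ that by (rule Max_ge)
        have "{s<..v} \<inter> J = {}"
        proof (rule ccontr)
          assume "{s<..v} \<inter> J \<noteq> {}"
          then obtain x where x: "x \<in> J" "s < x" "x \<le> v" by auto
          with sJ have "x \<in> J \<inter> {u<..v}" by auto
          with sm have "x \<le> s" by blast
          with x show False by simp
        qed
        then have fvs: "f v = f s" using pcD[OF assms _ _ vt, of s] sJ u0 by simp
        have s0: "0 < s" "s \<le> t" using sJ u0 vt by auto
        have nj: "s \<notin> jump_times f" using fr sJ s0 by auto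
        then have ls: "left_lim f s = f s" using s0 by (simp add: jump_times_def)
        obtain w' where w': "0 \<le> w'" "w' < s" "{w'<..<s} \<inter> J = {}" "\<And>r. w' \<le> r \<Longrightarrow> r < s \<Longrightarrow> f r = f w'" "left_lim f s = f w'"
          using pc_left[OF assms s0] by metis
        define w where "w = max u w'"
        have ws: "w' \<le> w" "w < s" "u \<le> w" using w'(2) sJ by (auto simp: w_def)
        have fw: "f w = f s" using w'(4)[of w] ws w'(5) ls by simp
        have sub: "J \<inter> {u<..w} \<subseteq> J \<inter> {u<..v} - {s}"
          using ws w'(3) sJ by auto
        have cw: "card (J \<inter> {u<..w}) < n"
        proof -
          have "card (J \<inter> {u<..w}) \<le> card (J \<inter> {u<..v} - {s})" using sub fJ by (intro card_mono) auto
          also have "\<dots> < card (J \<inter> {u<..v})" using fJ sJ by (intro card_Diff1_less) auto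
          finally show ?thesis using cn by simp
        qed
        have "{u<..w} \<subseteq> {u<..v}" using ws sJ by auto
        then have frw: "{u<..w} \<inter> (jump_times f \<inter> {0<..t}) = {}" using fr by blast
        have wt: "w \<le> t" using ws s0 by simp
        have "f w = f u" using less.IH[OF cw, rule_format, OF refl ws(3) wt frw] .
        with fvs fw show ?thesis by simp
      qed
    qed
  qed
  have "finite (jump_times f \<inter> {0<..t})" using pc_jumps[OF assms] fin by (rule finite_subset)
  then show ?thesis unfolding pc_def
  proof (intro conjI allI impI)
    fix u v :: real assume "0 \<le> u" "u \<le> v" "v \<le> t" "{u<..v} \<inter> (jump_times f \<inter> {0<..t}) = {}"
    then show "f v = f u" using main[OF \<open>0 \<le> u\<close>, rule_format, OF refl] by blast
  qed
qed

lemma pc_mono: assumes "pc f J t" "t' \<le> t" shows "pc f J t'"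
  unfolding pc_def using pc_fin[OF assms(1)] pcD[OF assms(1)] assms(2) by (meson order_trans)

lemma pc_super:
  assumes "pc f J t" "J \<subseteq> J'" "finite J'" shows "pc f J' t"
  unfolding pc_def
proof (intro conjI allI impI)
  fix u v :: real assume "0 \<le> u" "u \<le> v" "v \<le> t" "{u<..v} \<inter> J' = {}"
  moreover have "{u<..v} \<inter> J = {}" using assms(2) \<open>{u<..v} \<inter> J' = {}\<close> by auto
  ultimately show "f v = f u" using assms(1) unfolding pc_def by blast
qed (use assms in auto)

lemma ceil_interval:
  fixes s t :: real and n :: nat
  assumes "0 < s" "s \<le> t"
  shows "\<exists>k<2^n. real k * t / 2^n < s \<and> s \<le> real (Suc k) * t / 2^n"
proof -
  have t0: "0 < t" using assms by simp
  define y where "y = s * 2^n / t"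
  have y0: "0 < y" using assms t0 by (simp add: y_def)
  have yn: "y \<le> 2^n" using assms t0 by (simp add: y_def field_simps)
  define c where "c = \<lceil>y\<rceil>"
  have c1: "1 \<le> c" using y0 by (simp add: c_def)
  have cn: "c \<le> 2^n" using yn unfolding c_def by (simp add: ceiling_le_iff)
  define k where "k = nat c - 1"
  have kc: "real (Suc k) = real_of_int c" using c1 by (simp add: k_def)
  have kc': "real k = real_of_int c - 1" using c1 by (simp add: k_def)
  have "nat c \<le> 2^n" using cn by (simp add: nat_le_iff)
  moreover have "(0::nat) < 2^n" by simp
  ultimately have "k < 2^n" unfolding k_def by linarith
  moreover have "real_of_int c - 1 < y" "y \<le> real_of_int c" unfolding c_def by linarith+
  then have "real k * t / 2^n < s" "s \<le> real (Suc k) * t / 2^n"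
    using t0 unfolding kc kc' by (simp_all add: y_def field_simps)
  ultimately show ?thesis by blast
qed

lemma dyadic:
  fixes f :: "real \<Rightarrow> real" and G :: "real \<Rightarrow> real \<Rightarrow> real" and V :: "real \<Rightarrow> real"
  assumes pc: "pc f J t" and J: "J = jump_times f \<inter> {0<..t}" and t0: "0 \<le> t"
    and loc: "\<And>s. s \<in> J \<Longrightarrow> \<exists>\<delta>>0. \<forall>a b. s - \<delta> < a \<longrightarrow> a < s \<longrightarrow> s \<le> b \<longrightarrow> b \<le> t \<longrightarrow> b < s + \<delta> \<longrightarrow> G a b = V s"
  shows "\<forall>\<^sub>F n in sequentially. (\<Sum>k<2^n. if f (real (Suc k) * t / 2^n) \<noteq> f (real k * t / 2^n)
            then G (real k * t / 2^n) (real (Suc k) * t / 2^n) else 0) = (\<Sum>s\<in>J. V s)"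
proof (cases "t = 0")
  case True
  then have "J = {}" using J by auto
  then show ?thesis using True by simp
next
  case False
  then have tp: "0 < t" using t0 by simp
  have finJ: "finite J" using pc_fin[OF pc] .
  from loc obtain d where d: "\<And>s. s \<in> J \<Longrightarrow> d s > 0 \<and> (\<forall>a b. s - d s < a \<longrightarrow> a < s \<longrightarrow> s \<le> b \<longrightarrow> b \<le> t \<longrightarrow> b < s + d s \<longrightarrow> G a b = V s)"
    by metis
  define D where "D = insert 1 (d ` J \<union> (\<lambda>(x,y). \<bar>x - y\<bar>) ` {(x,y). x \<in> J \<and> y \<in> J \<and> x \<noteq> y})"
  have finD: "finite D" unfolding D_def using finJ
    by (intro finite_insert[THEN iffD2] finite_UnI finite_imageI) (auto intro: finite_subset[of _ "J \<times> J"])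
  have Dpos: "\<forall>x\<in>D. 0 < x" unfolding D_def using d by auto
  define \<delta> where "\<delta> = Min D"
  have \<delta>0: "0 < \<delta>" unfolding \<delta>_def using finD Dpos by (subst Min_gr_iff) (auto simp: D_def)
  have \<delta>d: "\<delta> \<le> d s" if "s \<in> J" for s unfolding \<delta>_def using finD that by (intro Min_le) (auto simp: D_def)
  have \<delta>gap: "\<delta> \<le> \<bar>x - y\<bar>" if "x \<in> J" "y \<in> J" "x \<noteq> y" for x y
    unfolding \<delta>_def using finD that by (intro Min_le) (auto simp: D_def)
  obtain N where N: "t / \<delta> < 2 ^ N" using real_arch_pow[of 2 "t / \<delta>"] by auto
  show ?thesis
  proof (rule eventually_sequentiallyI[of N])
    fix n assume nN: "N \<le> n"
    define h where "h = t / 2^n"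
    have "(2::real) ^ N \<le> 2 ^ n" using nN by (intro power_increasing) auto
    then have "t / \<delta> < 2 ^ n" using N by linarith
    then have h\<delta>: "h < \<delta>" using \<delta>0 by (simp add: h_def field_simps)
    define g where "g k = real k * t / 2^n" for k
    have gS: "g (Suc k) = g k + h" for k by (simp add: g_def h_def field_simps)
    have g0: "0 \<le> g k" for k using t0 by (simp add: g_def)
    have gmono: "g k \<le> g k'" if "k \<le> k'" for k k' using that t0
      by (simp add: g_def divide_right_mono mult_right_mono)
    have gt: "g k \<le> t" if "k \<le> 2^n" for k
    proof -
      have "g k \<le> g (2^n)" using gmono[OF that] .
      also have "\<dots> = t" by (simp add: g_def)
      finally show ?thesis .
    qed
    define I where "I k = {g k<..g (Suc k)}" for k
    have cover: "J = (\<Union>k\<in>{..<2^n}. J \<inter> I k)"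
    proof
      show "J \<subseteq> (\<Union>k\<in>{..<2^n}. J \<inter> I k)"
      proof
        fix s assume s: "s \<in> J"
        then have "0 < s" "s \<le> t" using J by auto
        from ceil_interval[OF this, of n] obtain k where "k < 2^n" "g k < s" "s \<le> g (Suc k)"
          unfolding g_def by blast
        then show "s \<in> (\<Union>k\<in>{..<2^n}. J \<inter> I k)" using s by (auto simp: I_def)
      qed
    qed auto
    have disj: "disjoint_family_on (\<lambda>k. J \<inter> I k) {..<2^n}"
      unfolding disjoint_family_on_def
    proof (intro ballI impI)
      fix k k' :: nat assume "k \<in> {..<2^n}" "k' \<in> {..<2^n}" "k \<noteq> k'"
      have *: "I a \<inter> I b = {}" if "a < b" for a b
      proof -
        have "g (Suc a) \<le> g b" using that by (intro gmono) simp
        then show ?thesis by (auto simp: I_def)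
      qed
      show "J \<inter> I k \<inter> (J \<inter> I k') = {}"
      proof (cases "k < k'")
        case True then show ?thesis using *[OF True] by auto
      next
        case False then have "k' < k" using \<open>k \<noteq> k'\<close> by simp
        then show ?thesis using *[of k' k] by auto
      qed
    qed
    have sumJ: "(\<Sum>s\<in>J. V s) = (\<Sum>k<2^n. \<Sum>s\<in>J \<inter> I k. V s)"
      by (subst cover, rule sum.UNION_disjoint_family) (use finJ disj in auto)
    have termk: "(if f (g (Suc k)) \<noteq> f (g k) then G (g k) (g (Suc k)) else 0) = (\<Sum>s\<in>J \<inter> I k. V s)"
      if k: "k < 2^n" for k
    proof -
      have gk0: "0 \<le> g k" by (rule g0)
      have gkt: "g (Suc k) \<le> t" using k by (intro gt) simp
      have gkk: "g k \<le> g (Suc k)" by (intro gmono) simp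
      show ?thesis
      proof (cases "J \<inter> I k = {}")
        case True
        have "f (g (Suc k)) = f (g k)" using pcD[OF pc gk0 gkk gkt] True by (simp add: I_def Int_commute)
        then show ?thesis using True by simp
      next
        case False
        then obtain s where s: "s \<in> J" "g k < s" "s \<le> g (Suc k)" by (auto simp: I_def)
        have single: "J \<inter> I k = {s}"
        proof (rule ccontr)
          assume "J \<inter> I k \<noteq> {s}"
          moreover have "s \<in> J \<inter> I k" using s by (simp add: I_def)
          ultimately obtain s' where "s' \<in> J \<inter> I k" "s' \<noteq> s" by blast
          then have s': "s' \<in> J" "g k < s'" "s' \<le> g (Suc k)" "s' \<noteq> s" by (auto simp: I_def)
          have "\<bar>s' - s\<bar> < h" using s s' gS[of k] by auto
          moreover have "\<delta> \<le> \<bar>s' - s\<bar>" using \<delta>gap[OF s'(1) s(1) s'(4)] .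
          ultimately show False using h\<delta> by simp
        qed
        have others: "x = s" if "x \<in> J" "g k < x" "x \<le> g (Suc k)" for x
        proof -
          have "x \<in> J \<inter> I k" using that by (simp add: I_def)
          then show ?thesis using single by blast
        qed
        have fr: "f (g (Suc k)) = f s"
        proof (rule pcD[OF pc])
          show "0 \<le> s" using s gk0 by simp
          show "s \<le> g (Suc k)" "g (Suc k) \<le> t" using s gkt by auto
          show "{s<..g (Suc k)} \<inter> J = {}"
          proof (rule ccontr)
            assume "{s<..g (Suc k)} \<inter> J \<noteq> {}"
            then obtain x where x: "x \<in> J" "s < x" "x \<le> g (Suc k)" by auto
            then have "x = s" using others s(2) by simp
            with x show False by simp
          qed
        qed
        have fl: "left_lim f s = f (g k)"
        proof (rule left_lim_eq[OF s(2)])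
          fix r assume r: "g k < r" "r < s"
          show "f r = f (g k)"
          proof (rule pcD[OF pc gk0])
            show "g k \<le> r" "r \<le> t" using r s gkt by auto
            show "{g k<..r} \<inter> J = {}"
            proof (rule ccontr)
              assume "{g k<..r} \<inter> J \<noteq> {}"
              then obtain x where x: "x \<in> J" "g k < x" "x \<le> r" by auto
              then have "x = s" using others r s(3) by simp
              with x r show False by simp
            qed
          qed
        qed
        have "s \<in> jump_times f" using s(1) J by auto
        then have jmp: "f s \<noteq> left_lim f s" by (simp add: jump_times_def)
        have neq: "f (g (Suc k)) \<noteq> f (g k)" using fr fl jmp by simp
        have "G (g k) (g (Suc k)) = V s"
        proof -
          have ds: "0 < d s" "\<forall>a b. s - d s < a \<longrightarrow> a < s \<longrightarrow> s \<le> b \<longrightarrow> b \<le> t \<longrightarrow> b < s + d s \<longrightarrow> G a b = V s"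
            using d[OF s(1)] by auto
          have "s - d s < g k" using s gS[of k] h\<delta> \<delta>d[OF s(1)] by linarith
          moreover have "g (Suc k) < s + d s" using s gS[of k] h\<delta> \<delta>d[OF s(1)] by linarith
          ultimately show ?thesis using ds(2) s gkt by blast
        qed
        then show ?thesis using neq single by simp
      qed
    qed
    show "(\<Sum>k<2^n. if f (real (Suc k) * t / 2^n) \<noteq> f (real k * t / 2^n)
            then G (real k * t / 2^n) (real (Suc k) * t / 2^n) else 0) = (\<Sum>s\<in>J. V s)"
      unfolding sumJ by (rule sum.cong[OF refl], rule termk[unfolded g_def]) simp
  qed
qed

lemma ennreal_INF_affine:
  fixes B :: "'x \<Rightarrow> ennreal" and c d :: ennreal
  assumes "S \<noteq> {}" "d < top"
  shows "c + d * (INF x\<in>S. B x) = (INF x\<in>S. c + d * B x)"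
proof -
  have "(\<lambda>y. c + d * y) (Inf (B ` S)) = (INF s\<in>B ` S. c + d * s)"
  proof (rule continuous_at_Inf_mono)
    show "mono (\<lambda>y. c + d * y)" by (auto simp: mono_def intro: add_left_mono mult_left_mono)
    have co: "continuous_on UNIV (\<lambda>y::ennreal. c + d * y)"
      by (intro continuous_on_add continuous_on_const ennreal_continuous_on_cmult assms(2) continuous_on_id)
    then have "isCont (\<lambda>y. c + d * y) (Inf (B ` S))"
      using continuous_on_eq_continuous_at[of UNIV] by blast
    then show "continuous (at_right (Inf (B ` S))) (\<lambda>y. c + d * y)"
      by (rule continuous_at_imp_continuous_within)
    show "B ` S \<noteq> {}" using assms by simp
    show "bdd_below (B ` S)" by simp
  qed
  then show ?thesis by (simp add: image_comp)
qed

lemma inf_comb: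
  fixes A B :: "'x \<Rightarrow> ennreal" and v :: ennreal and a :: real
  assumes "SX \<noteq> {}" "SY \<noteq> {}"
    and H: "\<And>x y. x \<in> SX \<Longrightarrow> y \<in> SY \<Longrightarrow> v \<le> ennreal a * A x + ennreal (1 - a) * B y"
  shows "v \<le> ennreal a * (INF x\<in>SX. A x) + ennreal (1 - a) * (INF y\<in>SY. B y)"
proof -
  have "v \<le> ennreal a * A x + ennreal (1 - a) * (INF y\<in>SY. B y)" if x: "x \<in> SX" for x
  proof -
    have eq: "ennreal a * A x + ennreal (1 - a) * (INF y\<in>SY. B y) = (INF y\<in>SY. ennreal a * A x + ennreal (1 - a) * B y)"
      by (rule ennreal_INF_affine[OF assms(2)]) simp
    show ?thesis unfolding eq by (intro INF_greatest H x)
  qed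
  then have "v \<le> (INF x\<in>SX. ennreal (1 - a) * (INF y\<in>SY. B y) + ennreal a * A x)"
    by (intro INF_greatest) (simp add: add.commute)
  also have "\<dots> = ennreal (1 - a) * (INF y\<in>SY. B y) + ennreal a * (INF x\<in>SX. A x)"
    by (rule ennreal_INF_affine[symmetric, OF assms(1)]) simp
  finally show ?thesis by (simp add: add.commute)
qed

lemma convex_F:
  fixes F :: "real \<Rightarrow> real"
  assumes "strictly_convex_on {0..} F" "0 \<le> p" "0 \<le> q" "0 \<le> a" "a \<le> 1"
  shows "F (a * p + (1 - a) * q) \<le> a * F p + (1 - a) * F q"
proof -
  consider "p = q" | "a = 0" | "a = 1" | "p \<noteq> q" "0 < a" "a < 1" using assms by linarith
  then show ?thesis
  proof cases
    case 1 then show ?thesis by (simp add: algebra_simps)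
  next
    case 2 then show ?thesis by simp
  next
    case 3 then show ?thesis by simp
  next
    case 4 then show ?thesis using assms unfolding strictly_convex_on_def
      by (meson atLeast_iff less_imp_le)
  qed
qed

lemma complete_measurable_AE:
  fixes f g :: "'a \<Rightarrow> real"
  assumes "complete_measure C" "g \<in> borel_measurable C" "AE x in C. f x = g x"
  shows "f \<in> borel_measurable C"
proof (rule measurableI)
  fix x assume "x \<in> space C" then show "f x \<in> space borel" by simp
next
  fix B :: "real set" assume B: "B \<in> sets borel"
  have "g -` B \<inter> space C \<in> sets C" using assms(2) B by (rule measurable_sets)
  moreover have "AE x in C. x \<in> g -` B \<inter> space C \<longleftrightarrow> x \<in> f -` B \<inter> space C"
    using assms(3) by (rule AE_mp) (auto intro!: AE_I2)
  ultimately show "f -` B \<inter> space C \<in> sets C"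
    using complete_measure.in_sets_AE[OF assms(1)] by blast
qed

lemma erlang_CDF_tendsto0:
  assumes "0 < l" "0 \<le> x"
  shows "(\<lambda>k. erlang_CDF k l x) \<longlonglongrightarrow> 0"
proof -
  have s: "(\<lambda>n. \<Sum>i\<le>n. (l * x) ^ i /\<^sub>R fact i) \<longlonglongrightarrow> exp (l * x)"
    using exp_converges[of "l * x"] unfolding sums_def_le .
  have eq: "erlang_CDF k l x = 1 - exp (- l * x) * (\<Sum>i\<le>k. (l * x) ^ i /\<^sub>R fact i)" for k
    using assms by (simp add: erlang_CDF_def sum_distrib_left divide_inverse mult_ac)
  have "(\<lambda>k. 1 - exp (- l * x) * (\<Sum>i\<le>k. (l * x) ^ i /\<^sub>R fact i)) \<longlonglongrightarrow> 1 - exp (- l * x) * exp (l * x)"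
    by (intro tendsto_intros s)
  also have "1 - exp (- l * x) * exp (l * x) = 0" by (simp add: exp_add[symmetric])
  finally show ?thesis unfolding eq .
qed

lemma cp_good:
  assumes P: "prob_space P" and lam: "0 < lam" and cp: "compound_poisson P lam nu Xc"
  shows "AE \<omega> in P. \<forall>t\<ge>0. pc (\<lambda>r. Xc r \<omega>) (jump_times (\<lambda>r. Xc r \<omega>) \<inter> {0<..t}) t"
proof -
  interpret prob_space P by (rule P)
  obtain S Y where Sm: "\<And>k. S k \<in> borel_measurable P"
    and S0: "\<And>\<omega>. S 0 \<omega> = 0"
    and ind: "indep_vars (\<lambda>_. borel) (\<lambda>k \<omega>. case k of Inl n \<Rightarrow> S (Suc n) \<omega> - S n \<omega> | Inr n \<Rightarrow> Y n \<omega>) UNIV"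
    and ex: "\<And>n. distributed P lborel (\<lambda>\<omega>. S (Suc n) \<omega> - S n \<omega>) (exponential_density lam)"
    and rep: "AE \<omega> in P. \<forall>t\<ge>0. Xc t \<omega> = (\<Sum>k\<in>{k. 1 \<le> k \<and> S k \<omega> \<le> t}. Y k \<omega>)"
    using cp unfolding compound_poisson_def by blast
  note Sm[measurable]
  define X where "X = (\<lambda>k \<omega>. case k of Inl n \<Rightarrow> S (Suc n) \<omega> - S n \<omega> | Inr n \<Rightarrow> Y n \<omega>)"
  have pos: "AE \<omega> in P. \<forall>k. S k \<omega> \<le> S (Suc k) \<omega>"
  proof (unfold AE_all_countable, intro allI)
    fix n
    have "prob {\<omega>\<in>space P. S (Suc n) \<omega> - S n \<omega> \<le> 0} = 1 - exp (- 0 * lam)"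
      by (rule exponential_distributedD_le[OF ex order_refl lam])
    then have "{\<omega>\<in>space P. S (Suc n) \<omega> - S n \<omega> \<le> 0} \<in> null_sets P"
      by (simp add: emeasure_eq_measure null_sets_def)
    then show "AE \<omega> in P. S n \<omega> \<le> S (Suc n) \<omega>"
      by (rule AE_I') auto
  qed
  have unb: "AE \<omega> in P. \<forall>N::nat. \<exists>k. real N < S k \<omega>"
  proof (unfold AE_all_countable, intro allI)
    fix N :: nat
    define A where "A = {\<omega>\<in>space P. \<forall>k. S k \<omega> \<le> real N}"
    have Am: "A \<in> sets P" unfolding A_def by measurable
    have bound: "prob A \<le> erlang_CDF k lam (real N)" for k
    proof -
      define I :: "(nat + nat) set" where "I = Inl ` {..<Suc k}"
      have cI: "card I = Suc k" unfolding I_def by (simp add: card_image)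
      have d: "distributed P lborel (\<lambda>\<omega>. \<Sum>i\<in>I. X i \<omega>) (erlang_density (card I - 1) lam)"
      proof (rule exponential_distributed_sum)
        show "finite I" "I \<noteq> {}" "0 < lam" unfolding I_def using lam by auto
        show "distributed P lborel (X i) (exponential_density lam)" if "i \<in> I" for i
          using that ex unfolding I_def X_def by auto
        show "indep_vars (\<lambda>i. borel) X I" using ind unfolding X_def by (rule indep_vars_subset) simp
      qed
      have sumS: "(\<Sum>i\<in>I. X i \<omega>) = S (Suc k) \<omega>" for \<omega>
      proof -
        have "(\<Sum>i\<in>I. X i \<omega>) = (\<Sum>n<Suc k. S (Suc n) \<omega> - S n \<omega>)"
          unfolding I_def by (subst sum.reindex) (auto simp: X_def)
        also have "\<dots> = S (Suc k) \<omega>" by (subst sum_lessThan_telescope) (simp add: S0)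
        finally show ?thesis .
      qed
      have "prob {\<omega>\<in>space P. (\<Sum>i\<in>I. X i \<omega>) \<le> real N} = erlang_CDF (card I - 1) lam (real N)"
        by (rule erlang_distributed_le[OF d lam]) simp
      then have eq: "prob {\<omega>\<in>space P. S (Suc k) \<omega> \<le> real N} = erlang_CDF k lam (real N)"
        using cI by (simp add: sumS)
      have "prob A \<le> prob {\<omega>\<in>space P. S (Suc k) \<omega> \<le> real N}"
        by (rule finite_measure_mono) (auto simp: A_def)
      then show ?thesis using eq by simp
    qed
    have "prob A \<le> 0"
    proof (rule LIMSEQ_le_const)
      show "(\<lambda>k. erlang_CDF k lam (real N)) \<longlonglongrightarrow> 0" by (rule erlang_CDF_tendsto0[OF lam]) simp
      show "\<exists>M. \<forall>k\<ge>M. prob A \<le> erlang_CDF k lam (real N)" using bound by blast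
    qed
    then have "A \<in> null_sets P" using Am by (simp add: emeasure_eq_measure null_sets_def measure_le_0_iff)
    then show "AE \<omega> in P. \<exists>k. real N < S k \<omega>"
      by (rule AE_I') (auto simp: A_def not_less)
  qed
  show ?thesis
    using pos unb rep
  proof (eventually_elim)
    case (elim \<omega>)
    show ?case
    proof (intro allI impI)
      fix t :: real assume t0: "0 \<le> t"
      obtain N :: nat where tN: "t \<le> real N" using real_arch_simple by blast
      obtain k0 where k0: "real N < S k0 \<omega>" using elim(2) by blast
      have mono: "S m \<omega> \<le> S m' \<omega>" if "m \<le> m'" for m m'
        using lift_Suc_mono_le[of "\<lambda>k. S k \<omega>", OF _ that] elim(1) by blast
      have finK: "finite {k. S k \<omega> \<le> t}"
      proof (rule finite_subset[of _ "{..<k0}"])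
        show "{k. S k \<omega> \<le> t} \<subseteq> {..<k0}"
        proof
          fix k assume "k \<in> {k. S k \<omega> \<le> t}"
          then have "S k \<omega> \<le> t" by simp
          then show "k \<in> {..<k0}" using mono[of k0 k] k0 tN by (cases "k0 \<le> k") auto
        qed
      qed simp
      define J0 where "J0 = (\<lambda>k. S k \<omega>) ` {k. 1 \<le> k \<and> S k \<omega> \<le> t}"
      have "pc (\<lambda>r. Xc r \<omega>) J0 t"
        unfolding pc_def
      proof (intro conjI allI impI)
        show "finite J0" unfolding J0_def using finK by (auto intro: finite_subset)
        fix u v assume uv: "0 \<le> u" "u \<le> v" "v \<le> t" "{u<..v} \<inter> J0 = {}"
        have "{k. 1 \<le> k \<and> S k \<omega> \<le> u} = {k. 1 \<le> k \<and> S k \<omega> \<le> v}"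
        proof (intro set_eqI iffI)
          fix k assume "k \<in> {k. 1 \<le> k \<and> S k \<omega> \<le> v}"
          then have k: "1 \<le> k" "S k \<omega> \<le> v" by auto
          have "S k \<omega> \<in> J0" unfolding J0_def using k uv by auto
          then have "\<not> (u < S k \<omega>)" using uv(4) k by auto
          then show "k \<in> {k. 1 \<le> k \<and> S k \<omega> \<le> u}" using k by auto
        qed (use uv in auto)
        then show "Xc v \<omega> = Xc u \<omega>" using elim(3) uv by auto
      qed
      then show "pc (\<lambda>r. Xc r \<omega>) (jump_times (\<lambda>r. Xc r \<omega>) \<inter> {0<..t}) t"
        by (rule pc_reduce)
    qed
  qed
qed

lemma pc_loc:
  assumes "pc f J t" "0 < s" "s \<le> t"
  shows "\<exists>\<delta>>0. \<forall>a b. s - \<delta> < a \<longrightarrow> a < s \<longrightarrow> s \<le> b \<longrightarrow> b < s + \<delta> \<longrightarrow> b \<le> t \<longrightarrow> f a = left_lim f s \<and> f b = f s"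
proof -
  obtain w where w: "0 \<le> w" "w < s" "\<And>r. w \<le> r \<Longrightarrow> r < s \<Longrightarrow> f r = f w" "left_lim f s = f w"
    using pc_left[OF assms] by metis
  from pc_right[OF assms(1) less_imp_le[OF assms(2)]] obtain e where
    e: "0 < e" "\<forall>b. s \<le> b \<longrightarrow> b \<le> t \<longrightarrow> b < s + e \<longrightarrow> f b = f s"
    by (elim exE conjE)
  show ?thesis
  proof (intro exI[of _ "min (s - w) e"] conjI allI impI)
    show "0 < min (s - w) e" using w(2) e(1) by simp
    fix a b assume ab: "s - min (s - w) e < a" "a < s" "s \<le> b" "b < s + min (s - w) e" "b \<le> t"
    have "f a = f w" using w(3)[of a] ab by simp
    then show "f a = left_lim f s" using w(4) by simp
    show "f b = f s" by (rule e(2)[rule_format]) (use ab in auto)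
  qed
qed

lemma nat_filt_meas:
  fixes f :: "'a \<Rightarrow> real" and X :: "real \<Rightarrow> 'a \<Rightarrow> real"
  assumes Xm: "\<And>s. 0 \<le> s \<Longrightarrow> s \<le> t \<Longrightarrow> X s \<in> borel_measurable C" and sp: "space C = space P"
    and f: "f \<in> borel_measurable (nat_filt P X t)"
  shows "f \<in> borel_measurable C"
proof -
  define G where "G = {X s -` B \<inter> space P | s B. 0 \<le> s \<and> s \<le> t \<and> B \<in> sets borel}"
  have GP: "G \<subseteq> Pow (space P)" unfolding G_def by auto
  have sN: "sets (nat_filt P X t) = sigma_sets (space P) G" and spN: "space (nat_filt P X t) = space P"
    unfolding nat_filt_def G_def[symmetric] using GP by simp_all
  have "G \<subseteq> sets C"
  proof
    fix A assume "A \<in> G"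
    then obtain s B where A: "A = X s -` B \<inter> space P" "0 \<le> s" "s \<le> t" "B \<in> sets borel" unfolding G_def by blast
    show "A \<in> sets C" using measurable_sets[OF Xm[OF A(2,3)] A(4)] A(1) sp by simp
  qed
  then have sub: "sets (nat_filt P X t) \<subseteq> sets C"
    unfolding sN using sets.sigma_sets_subset[OF \<open>G \<subseteq> sets C\<close>] sp by simp
  show ?thesis
  proof (rule measurableI)
    fix x assume "x \<in> space C" then show "f x \<in> space borel" by simp
  next
    fix B :: "real set" assume "B \<in> sets borel"
    then have "f -` B \<inter> space (nat_filt P X t) \<in> sets (nat_filt P X t)" by (rule measurable_sets[OF f])
    then show "f -` B \<inter> space C \<in> sets C" using sub spN sp by auto
  qed
qed

lemma pc_leftlim_ge:
  assumes "pc g J T" "0 < s" "s \<le> T" "\<And>s t. 0 \<le> s \<Longrightarrow> s \<le> t \<Longrightarrow> g t \<le> g s"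
  shows "g s \<le> left_lim g s"
proof -
  obtain w where w: "0 \<le> w" "w < s" "left_lim g s = g w"
    using pc_left[OF assms(1-3)] by metis
  show ?thesis using assms(4)[OF w(1)] w(2,3) by simp
qed

lemma cost_dyadic:
  fixes Xp g F :: "real \<Rightarrow> real"
  assumes pcX: "pc Xp J T" and J: "J = jump_times Xp \<inter> {0<..T}" and T0: "0 \<le> T"
    and pcg: "pc g J T" and mono: "\<And>s t. 0 \<le> s \<Longrightarrow> s \<le> t \<Longrightarrow> g t \<le> g s"
  shows "\<forall>\<^sub>F n in sequentially. (\<Sum>k<2^n. if Xp (real (Suc k) * T / 2^n) \<noteq> Xp (real k * T / 2^n)
     then F (max 0 (g (real k * T / 2^n) - g (real (Suc k) * T / 2^n))) else 0) = (\<Sum>s\<in>J. F (left_lim g s - g s))"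
proof (rule dyadic[where G = "\<lambda>a b. F (max 0 (g a - g b))" and V = "\<lambda>s. F (left_lim g s - g s)", OF pcX J T0])
  fix s assume s: "s \<in> J"
  then have s0: "0 < s" "s \<le> T" using J by auto
  have ge: "g s \<le> left_lim g s" by (rule pc_leftlim_ge[OF pcg s0 mono])
  from pc_loc[OF pcg s0] obtain \<delta> where \<delta>: "\<delta> > 0"
    "\<forall>a b. s - \<delta> < a \<longrightarrow> a < s \<longrightarrow> s \<le> b \<longrightarrow> b < s + \<delta> \<longrightarrow> b \<le> T \<longrightarrow> g a = left_lim g s \<and> g b = g s"
    by (elim exE conjE)
  show "\<exists>\<delta>>0. \<forall>a b. s - \<delta> < a \<longrightarrow> a < s \<longrightarrow> s \<le> b \<longrightarrow> b \<le> T \<longrightarrow> b < s + \<delta> \<longrightarrow>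
          F (max 0 (g a - g b)) = F (left_lim g s - g s)"
  proof (intro exI[of _ \<delta>] conjI allI impI)
    show "0 < \<delta>" by fact
    fix a b assume ab: "s - \<delta> < a" "a < s" "s \<le> b" "b \<le> T" "b < s + \<delta>"
    have "g a = left_lim g s \<and> g b = g s" using \<delta>(2) ab by blast
    then have "max 0 (g a - g b) = left_lim g s - g s" using ge by simp
    then show "F (max 0 (g a - g b)) = F (left_lim g s - g s)" by simp
  qed
qed

lemma cost_nonneg:
  fixes g F :: "real \<Rightarrow> real"
  assumes "pc g J T" "J \<subseteq> {0<..T}" "0 \<le> T" "\<And>s t. 0 \<le> s \<Longrightarrow> s \<le> t \<Longrightarrow> g t \<le> g s"
    "\<And>t. 0 \<le> t \<Longrightarrow> 0 \<le> g t" "\<forall>x\<ge>0. 0 \<le> F x"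
  shows "0 \<le> (\<Sum>s\<in>J. F (left_lim g s - g s)) + F (g T)"
proof -
  have "0 \<le> F (left_lim g s - g s)" if "s \<in> J" for s
  proof -
    have "0 < s" "s \<le> T" using that assms(2) by auto
    then have "g s \<le> left_lim g s" by (rule pc_leftlim_ge[OF assms(1) _ _ assms(4)])
    then show ?thesis using assms(6) by simp
  qed
  then have "0 \<le> (\<Sum>s\<in>J. F (left_lim g s - g s))" by (rule sum_nonneg)
  moreover have "0 \<le> F (g T)" using assms(5,6,3) by simp
  ultimately show ?thesis by simp
qed

lemma cost_convex:
  fixes g h :: "real \<Rightarrow> real" and a :: real
  assumes pg: "pc g J T" and ph: "pc h J T" and J: "J \<subseteq> {0<..T}" and T0: "0 \<le> T"
    and mg: "\<And>s t. 0 \<le> s \<Longrightarrow> s \<le> t \<Longrightarrow> g t \<le> g s"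
    and mh: "\<And>s t. 0 \<le> s \<Longrightarrow> s \<le> t \<Longrightarrow> h t \<le> h s"
    and ng: "\<And>t. 0 \<le> t \<Longrightarrow> 0 \<le> g t" and nh: "\<And>t. 0 \<le> t \<Longrightarrow> 0 \<le> h t"
    and F: "strictly_convex_on {0..} F" and a: "0 \<le> a" "a \<le> 1"
  shows "(\<Sum>s\<in>J. F (left_lim (\<lambda>r. a * g r + (1 - a) * h r) s - (a * g s + (1 - a) * h s))) + F (a * g T + (1 - a) * h T)
     \<le> a * ((\<Sum>s\<in>J. F (left_lim g s - g s)) + F (g T)) + (1 - a) * ((\<Sum>s\<in>J. F (left_lim h s - h s)) + F (h T))"
proof -
  have trm: "F (left_lim (\<lambda>r. a * g r + (1 - a) * h r) s - (a * g s + (1 - a) * h s))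
      \<le> a * F (left_lim g s - g s) + (1 - a) * F (left_lim h s - h s)" if s: "s \<in> J" for s
  proof -
    have s0: "0 < s" "s \<le> T" using s J by auto
    obtain w1 where w1: "0 \<le> w1" "w1 < s" "\<And>r. w1 \<le> r \<Longrightarrow> r < s \<Longrightarrow> g r = g w1" "left_lim g s = g w1"
      using pc_left[OF pg s0] by metis
    obtain w2 where w2: "0 \<le> w2" "w2 < s" "\<And>r. w2 \<le> r \<Longrightarrow> r < s \<Longrightarrow> h r = h w2" "left_lim h s = h w2"
      using pc_left[OF ph s0] by metis
    have ll: "left_lim (\<lambda>r. a * g r + (1 - a) * h r) s = a * g w1 + (1 - a) * h w2"
    proof (rule left_lim_eq[of "max w1 w2"])
      show "max w1 w2 < s" using w1(2) w2(2) by simp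
      fix r assume r: "max w1 w2 < r" "r < s"
      have "g r = g w1" using w1(3)[of r] r by simp
      moreover have "h r = h w2" using w2(3)[of r] r by simp
      ultimately show "a * g r + (1 - a) * h r = a * g w1 + (1 - a) * h w2" by simp
    qed
    have p: "0 \<le> g w1 - g s" using mg[OF w1(1), of s] w1(2) by simp
    have q: "0 \<le> h w2 - h s" using mh[OF w2(1), of s] w2(2) by simp
    have "left_lim (\<lambda>r. a * g r + (1 - a) * h r) s - (a * g s + (1 - a) * h s)
        = a * (g w1 - g s) + (1 - a) * (h w2 - h s)" unfolding ll by (simp add: algebra_simps)
    then have "F (left_lim (\<lambda>r. a * g r + (1 - a) * h r) s - (a * g s + (1 - a) * h s))
        \<le> a * F (g w1 - g s) + (1 - a) * F (h w2 - h s)"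
      using convex_F[OF F p q a] by simp
    then show ?thesis unfolding w1(4) w2(4) .
  qed
  have "(\<Sum>s\<in>J. F (left_lim (\<lambda>r. a * g r + (1 - a) * h r) s - (a * g s + (1 - a) * h s)))
     \<le> (\<Sum>s\<in>J. a * F (left_lim g s - g s) + (1 - a) * F (left_lim h s - h s))"
    by (rule sum_mono) (rule trm)
  also have "\<dots> = a * (\<Sum>s\<in>J. F (left_lim g s - g s)) + (1 - a) * (\<Sum>s\<in>J. F (left_lim h s - h s))"
    by (simp add: sum.distrib sum_distrib_left)
  finally have A: "(\<Sum>s\<in>J. F (left_lim (\<lambda>r. a * g r + (1 - a) * h r) s - (a * g s + (1 - a) * h s)))
     \<le> a * (\<Sum>s\<in>J. F (left_lim g s - g s)) + (1 - a) * (\<Sum>s\<in>J. F (left_lim h s - h s))" .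
  have B: "F (a * g T + (1 - a) * h T) \<le> a * F (g T) + (1 - a) * F (h T)"
    by (rule convex_F[OF F ng[OF T0] nh[OF T0] a])
  from add_mono[OF A B] show ?thesis by (simp add: algebra_simps)
qed

lemma admissible_comb:
  fixes \<xi> \<eta> :: "real \<Rightarrow> 'a \<Rightarrow> real"
  assumes ax: "admissible P X x \<xi>" and ay: "admissible P X y \<eta>" and a: "0 \<le> a" "a \<le> 1"
  shows "admissible P X (a * x + (1 - a) * y) (\<lambda>t \<omega>. a * \<xi> t \<omega> + (1 - a) * \<eta> t \<omega>)"
proof -
  have m: "\<forall>t\<ge>0. (\<lambda>\<omega>. a * \<xi> t \<omega> + (1 - a) * \<eta> t \<omega>) \<in> borel_measurable (nat_filt P X t)"
  proof (intro allI impI)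
    fix t :: real assume t0: "0 \<le> t"
    have m1: "\<xi> t \<in> borel_measurable (nat_filt P X t)" using ax t0 unfolding admissible_def by blast
    have m2: "\<eta> t \<in> borel_measurable (nat_filt P X t)" using ay t0 unfolding admissible_def by blast
    show "(\<lambda>\<omega>. a * \<xi> t \<omega> + (1 - a) * \<eta> t \<omega>) \<in> borel_measurable (nat_filt P X t)"
      by (intro borel_measurable_add borel_measurable_times borel_measurable_const m1 m2)
  qed
  have p: "\<forall>\<omega>\<in>space P. (a * \<xi> 0 \<omega> + (1 - a) * \<eta> 0 \<omega>) = a * x + (1 - a) * y \<and>
        (\<forall>t\<ge>0. 0 \<le> a * \<xi> t \<omega> + (1 - a) * \<eta> t \<omega>) \<and>
        (\<forall>s t. 0 \<le> s \<longrightarrow> s \<le> t \<longrightarrow> a * \<xi> t \<omega> + (1 - a) * \<eta> t \<omega> \<le> a * \<xi> s \<omega> + (1 - a) * \<eta> s \<omega>) \<and>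
        (\<forall>s t. 0 \<le> s \<longrightarrow> s \<le> t \<longrightarrow> {s<..t} \<inter> jump_times (\<lambda>r. X r \<omega>) = {} \<longrightarrow>
           a * \<xi> t \<omega> + (1 - a) * \<eta> t \<omega> = a * \<xi> s \<omega> + (1 - a) * \<eta> s \<omega>)"
  proof (rule ballI)
    fix \<omega> assume \<omega>: "\<omega> \<in> space P"
    have A1: "\<xi> 0 \<omega> = x" using ax \<omega> unfolding admissible_def by blast
    have B1: "\<eta> 0 \<omega> = y" using ay \<omega> unfolding admissible_def by blast
    have A2: "0 \<le> \<xi> t \<omega>" if "0 \<le> t" for t using ax \<omega> that unfolding admissible_def by blast
    have B2: "0 \<le> \<eta> t \<omega>" if "0 \<le> t" for t using ay \<omega> that unfolding admissible_def by blast
    have A3: "\<xi> t \<omega> \<le> \<xi> s \<omega>" if "0 \<le> s" "s \<le> t" for s t using ax \<omega> that unfolding admissible_def by blast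
    have B3: "\<eta> t \<omega> \<le> \<eta> s \<omega>" if "0 \<le> s" "s \<le> t" for s t using ay \<omega> that unfolding admissible_def by blast
    have A4: "\<xi> t \<omega> = \<xi> s \<omega>" if "0 \<le> s" "s \<le> t" "{s<..t} \<inter> jump_times (\<lambda>r. X r \<omega>) = {}" for s t
      using ax \<omega> that unfolding admissible_def by blast
    have B4: "\<eta> t \<omega> = \<eta> s \<omega>" if "0 \<le> s" "s \<le> t" "{s<..t} \<inter> jump_times (\<lambda>r. X r \<omega>) = {}" for s t
      using ay \<omega> that unfolding admissible_def by blast
    show "(a * \<xi> 0 \<omega> + (1 - a) * \<eta> 0 \<omega>) = a * x + (1 - a) * y \<and>
        (\<forall>t\<ge>0. 0 \<le> a * \<xi> t \<omega> + (1 - a) * \<eta> t \<omega>) \<and>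
        (\<forall>s t. 0 \<le> s \<longrightarrow> s \<le> t \<longrightarrow> a * \<xi> t \<omega> + (1 - a) * \<eta> t \<omega> \<le> a * \<xi> s \<omega> + (1 - a) * \<eta> s \<omega>) \<and>
        (\<forall>s t. 0 \<le> s \<longrightarrow> s \<le> t \<longrightarrow> {s<..t} \<inter> jump_times (\<lambda>r. X r \<omega>) = {} \<longrightarrow>
           a * \<xi> t \<omega> + (1 - a) * \<eta> t \<omega> = a * \<xi> s \<omega> + (1 - a) * \<eta> s \<omega>)"
    proof (intro conjI allI impI)
      show "a * \<xi> 0 \<omega> + (1 - a) * \<eta> 0 \<omega> = a * x + (1 - a) * y" using A1 B1 by simp
      fix t :: real assume "0 \<le> t"
      then show "0 \<le> a * \<xi> t \<omega> + (1 - a) * \<eta> t \<omega>" using A2 B2 a by simp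
    next
      fix s t :: real assume st: "0 \<le> s" "s \<le> t"
      then show "a * \<xi> t \<omega> + (1 - a) * \<eta> t \<omega> \<le> a * \<xi> s \<omega> + (1 - a) * \<eta> s \<omega>"
        using A3[OF st] B3[OF st] a by (intro add_mono mult_left_mono) auto
    next
      fix s t :: real assume st: "0 \<le> s" "s \<le> t" "{s<..t} \<inter> jump_times (\<lambda>r. X r \<omega>) = {}"
      then show "a * \<xi> t \<omega> + (1 - a) * \<eta> t \<omega> = a * \<xi> s \<omega> + (1 - a) * \<eta> s \<omega>"
        using A4[OF st] B4[OF st] by simp
    qed
  qed
  show ?thesis unfolding admissible_def using m p by (intro conjI)
qed


theorem lemma3p6:
  fixes P :: "'a measure" and M :: "real \<Rightarrow> 'a \<Rightarrow> 'e::finite"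
    and Nc :: "'e \<Rightarrow> real \<Rightarrow> 'a \<Rightarrow> real"
    and Q :: "'e \<Rightarrow> 'e \<Rightarrow> real" and lam :: "'e \<Rightarrow> real" and nu :: "'e \<Rightarrow> real measure"
    and p0 :: "'e \<Rightarrow> real" and F :: "real \<Rightarrow> real" and T :: real
  assumes "prob_space P"
    and "is_generator Q"
    and "\<forall>i. 0 \<le> p0 i" and "(\<Sum>i\<in>UNIV. p0 i) = 1"
    and "ctmc P M Q p0"
    and "\<forall>i. 0 < lam i"
    and "\<forall>i. prob_space (nu i) \<and> sets (nu i) = sets borel"
    and "\<forall>i. compound_poisson P (lam i) (nu i) (Nc i)"
    and "prob_space.indep_vars P (\<lambda>_. Pi\<^sub>M UNIV (\<lambda>_. borel)) (\<lambda>i \<omega> t. Nc i t \<omega>) UNIV"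
    and "prob_space.indep_set P
           {(\<lambda>\<omega> t. M t \<omega>) -` A \<inter> space P | A. A \<in> sets (Pi\<^sub>M UNIV (\<lambda>_. count_space UNIV))}
           {(\<lambda>\<omega> i t. Nc i t \<omega>) -` A \<inter> space P | A. A \<in> sets (Pi\<^sub>M UNIV (\<lambda>_. Pi\<^sub>M UNIV (\<lambda>_. borel)))}"
    and "\<forall>x\<ge>0. 0 \<le> F x"
    and "strict_mono_on {0..} F"
    and "strictly_convex_on {0..} F"
    and "0 \<le> T"
  shows "\<forall>x y a. 0 \<le> x \<longrightarrow> 0 \<le> y \<longrightarrow> 0 \<le> a \<longrightarrow> a \<le> 1 \<longrightarrow>
           value_fn P (observed M Nc) F T (a * x + (1 - a) * y)
             \<le> ennreal a * value_fn P (observed M Nc) F T x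
               + ennreal (1 - a) * value_fn P (observed M Nc) F T y"
proof -
  interpret prob_space P by (rule assms(1))
  define X where "X = observed M Nc"
  define C where "C = completion P"
  have spC: "space C = space P" by (simp add: C_def)
  have cmC: "complete_measure C" unfolding C_def by (rule completion.complete_measure_axioms)
  have Mm: "\<And>t. M t \<in> measurable P (count_space UNIV)"
    using assms(5) unfolding ctmc_def by blast
  have Mr: "\<And>\<omega> t. 0 \<le> t \<Longrightarrow> \<exists>\<epsilon>>0. \<forall>s\<in>{t..<t+\<epsilon>}. M s \<omega> = M t \<omega>"
    using assms(5) unfolding ctmc_def by blast
  have Ncm: "\<And>i t. Nc i t \<in> borel_measurable P"
    using assms(8) unfolding compound_poisson_def by blast
  note [measurable] = Mm Ncm
  have goodN: "AE \<omega> in P. \<forall>i\<in>UNIV. \<forall>t\<ge>0. pc (\<lambda>r. Nc i r \<omega>) (jump_times (\<lambda>r. Nc i r \<omega>) \<inter> {0<..t}) t"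
  proof (rule AE_finite_allI)
    fix i show "AE \<omega> in P. \<forall>t\<ge>0. pc (\<lambda>r. Nc i r \<omega>) (jump_times (\<lambda>r. Nc i r \<omega>) \<inter> {0<..t}) t"
      by (rule cp_good[OF assms(1), of "lam i" "nu i"]) (use assms(6,8) in auto)
  qed simp
  have goodX: "AE \<omega> in P. \<forall>t\<ge>0. pc (\<lambda>r. X r \<omega>) (jump_times (\<lambda>r. X r \<omega>) \<inter> {0<..t}) t"
    using goodN
  proof eventually_elim
    case (elim \<omega>)
    show ?case
    proof (intro allI impI)
      fix t :: real assume t0: "0 \<le> t"
      define Ji where "Ji i = jump_times (\<lambda>r. Nc i r \<omega>) \<inter> {0<..t}" for i
      have finJi: "finite (Ji i)" for i
        using elim t0 unfolding Ji_def by (blast intro: pc_fin)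
      define J where "J = (\<Union>i. Ji i)"
      have "pc (\<lambda>r. X r \<omega>) J t" unfolding pc_def
      proof (intro conjI allI impI)
        show "finite J" unfolding J_def using finJi by simp
        fix u v assume uv: "0 \<le> u" "u \<le> v" "v \<le> t" "{u<..v} \<inter> J = {}"
        have eqs: "jump_times (\<lambda>r. Nc i r \<omega>) \<inter> {0<..v} = jump_times (\<lambda>r. Nc i r \<omega>) \<inter> {0<..u}" for i
        proof
          show "jump_times (\<lambda>r. Nc i r \<omega>) \<inter> {0<..u} \<subseteq> jump_times (\<lambda>r. Nc i r \<omega>) \<inter> {0<..v}"
            using uv by auto
          show "jump_times (\<lambda>r. Nc i r \<omega>) \<inter> {0<..v} \<subseteq> jump_times (\<lambda>r. Nc i r \<omega>) \<inter> {0<..u}"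
          proof
            fix s assume s: "s \<in> jump_times (\<lambda>r. Nc i r \<omega>) \<inter> {0<..v}"
            then have "s \<in> J" unfolding J_def Ji_def using uv by auto
            then have "\<not> u < s" using uv(4) s by auto
            then show "s \<in> jump_times (\<lambda>r. Nc i r \<omega>) \<inter> {0<..u}" using s by auto
          qed
        qed
        show "X v \<omega> = X u \<omega>" unfolding X_def observed_def by (simp only: eqs)
      qed
      then show "pc (\<lambda>r. X r \<omega>) (jump_times (\<lambda>r. X r \<omega>) \<inter> {0<..t}) t" by (rule pc_reduce)
    qed
  qed
  have Xm: "X t \<in> borel_measurable C" if t0: "0 \<le> t" for t
  proof -
    define D where "D n \<omega> = (\<Sum>i\<in>UNIV. \<Sum>k<2^n. if Nc i (real (Suc k) * t / 2^n) \<omega> \<noteq> Nc i (real k * t / 2^n) \<omega>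
        then (if M (real (Suc k) * t / 2^n) \<omega> = i then Nc i (real (Suc k) * t / 2^n) \<omega> - Nc i (real k * t / 2^n) \<omega> else 0) else 0)" for n \<omega>
    have Dm: "D n \<in> borel_measurable P" for n unfolding D_def by measurable
    have ae: "AE \<omega> in P. X t \<omega> = lim (\<lambda>n. D n \<omega>)"
      using goodN
    proof eventually_elim
      case (elim \<omega>)
      have ev: "\<forall>\<^sub>F n in sequentially. (\<Sum>k<2^n. if Nc i (real (Suc k) * t / 2^n) \<omega> \<noteq> Nc i (real k * t / 2^n) \<omega>
        then (if M (real (Suc k) * t / 2^n) \<omega> = i then Nc i (real (Suc k) * t / 2^n) \<omega> - Nc i (real k * t / 2^n) \<omega> else 0) else 0)
        = (\<Sum>s\<in>jump_times (\<lambda>r. Nc i r \<omega>) \<inter> {0<..t}. if M s \<omega> = i then Nc i s \<omega> - left_lim (\<lambda>r. Nc i r \<omega>) s else 0)" for i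
      proof -
        have pci: "pc (\<lambda>r. Nc i r \<omega>) (jump_times (\<lambda>r. Nc i r \<omega>) \<inter> {0<..t}) t" using elim t0 by blast
        show ?thesis
        proof (rule dyadic[where G = "\<lambda>a b. if M b \<omega> = i then Nc i b \<omega> - Nc i a \<omega> else 0"
              and V = "\<lambda>s. if M s \<omega> = i then Nc i s \<omega> - left_lim (\<lambda>r. Nc i r \<omega>) s else 0", OF pci refl t0])
          fix s assume s: "s \<in> jump_times (\<lambda>r. Nc i r \<omega>) \<inter> {0<..t}"
          then have s0: "0 < s" "s \<le> t" by auto
          from pc_loc[OF pci s0] obtain \<delta>1 where \<delta>1: "\<delta>1 > 0"
            "\<forall>a b. s - \<delta>1 < a \<longrightarrow> a < s \<longrightarrow> s \<le> b \<longrightarrow> b < s + \<delta>1 \<longrightarrow> b \<le> t \<longrightarrow>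
               Nc i a \<omega> = left_lim (\<lambda>r. Nc i r \<omega>) s \<and> Nc i b \<omega> = Nc i s \<omega>"
            by (elim exE conjE)
          from Mr[of s \<omega>] s0 obtain \<epsilon> where \<epsilon>: "\<epsilon> > 0" "\<forall>r\<in>{s..<s+\<epsilon>}. M r \<omega> = M s \<omega>"
            by (auto elim!: exE)
          show "\<exists>\<delta>>0. \<forall>a b. s - \<delta> < a \<longrightarrow> a < s \<longrightarrow> s \<le> b \<longrightarrow> b \<le> t \<longrightarrow> b < s + \<delta> \<longrightarrow>
              (if M b \<omega> = i then Nc i b \<omega> - Nc i a \<omega> else 0) = (if M s \<omega> = i then Nc i s \<omega> - left_lim (\<lambda>r. Nc i r \<omega>) s else 0)"
          proof (intro exI[of _ "min \<delta>1 \<epsilon>"] conjI allI impI)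
            show "0 < min \<delta>1 \<epsilon>" using \<delta>1(1) \<epsilon>(1) by simp
            fix a b assume ab: "s - min \<delta>1 \<epsilon> < a" "a < s" "s \<le> b" "b \<le> t" "b < s + min \<delta>1 \<epsilon>"
            have "Nc i a \<omega> = left_lim (\<lambda>r. Nc i r \<omega>) s \<and> Nc i b \<omega> = Nc i s \<omega>" by (rule \<delta>1(2)[rule_format]) (use ab in auto)
            moreover have "M b \<omega> = M s \<omega>" by (rule \<epsilon>(2)[rule_format]) (use ab in auto)
            ultimately show "(if M b \<omega> = i then Nc i b \<omega> - Nc i a \<omega> else 0) = (if M s \<omega> = i then Nc i s \<omega> - left_lim (\<lambda>r. Nc i r \<omega>) s else 0)"
              by simp
          qed
        qed
      qed
      define Inn where "Inn i n = (\<Sum>k<2^n. if Nc i (real (Suc k) * t / 2^n) \<omega> \<noteq> Nc i (real k * t / 2^n) \<omega>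
        then (if M (real (Suc k) * t / 2^n) \<omega> = i then Nc i (real (Suc k) * t / 2^n) \<omega> - Nc i (real k * t / 2^n) \<omega> else 0) else 0)" for i n
      define Out where "Out i = (\<Sum>s\<in>jump_times (\<lambda>r. Nc i r \<omega>) \<inter> {0<..t}. if M s \<omega> = i then Nc i s \<omega> - left_lim (\<lambda>r. Nc i r \<omega>) s else 0)" for i
      have ev': "\<forall>\<^sub>F n in sequentially. Inn i n = Out i" for i unfolding Inn_def Out_def by (rule ev)
      have "\<forall>\<^sub>F n in sequentially. \<forall>i. Inn i n = Out i" by (rule eventually_all_finite) (rule ev')
      then have "\<forall>\<^sub>F n in sequentially. D n \<omega> = X t \<omega>"
      proof eventually_elim
        case (elim n)
        have "D n \<omega> = (\<Sum>i\<in>UNIV. Inn i n)" unfolding D_def Inn_def ..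
        also have "\<dots> = (\<Sum>i\<in>UNIV. Out i)" using elim by simp
        also have "\<dots> = X t \<omega>" unfolding Out_def X_def observed_def ..
        finally show ?case .
      qed
      then have "(\<lambda>n. D n \<omega>) \<longlonglongrightarrow> X t \<omega>" by (rule tendsto_eventually)
      then show ?case by (simp add: limI)
    qed
    have "(\<lambda>\<omega>. lim (\<lambda>n. D n \<omega>)) \<in> borel_measurable P" by (rule borel_measurable_lim_metric) (rule Dm)
    then have "(\<lambda>\<omega>. lim (\<lambda>n. D n \<omega>)) \<in> borel_measurable C" unfolding C_def by (rule measurable_completion)
    moreover have "AE \<omega> in C. X t \<omega> = lim (\<lambda>n. D n \<omega>)" unfolding C_def by (rule AE_completion[OF ae])
    ultimately show ?thesis by (rule complete_measurable_AE[OF cmC])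
  qed
  have xim: "\<xi> t \<in> borel_measurable C" if adm: "admissible P X z \<xi>" and t0: "0 \<le> t" for \<xi> z t
  proof (rule nat_filt_meas[of t X C P])
    show "\<And>s. 0 \<le> s \<Longrightarrow> s \<le> t \<Longrightarrow> X s \<in> borel_measurable C" using Xm by blast
    show "space C = space P" by (rule spC)
    show "\<xi> t \<in> borel_measurable (nat_filt P X t)" using adm t0 unfolding admissible_def by blast
  qed
  define F' where "F' = (\<lambda>x. F (max 0 x))"
  have Fmono: "mono F'" unfolding mono_def F'_def
    by (auto intro!: strict_mono_on_leD[OF assms(12)])
  have Fm[measurable]: "F' \<in> borel_measurable borel" by (rule borel_measurable_mono[OF Fmono])
  have adm_mono: "\<xi> t \<omega> \<le> \<xi> s \<omega>" if "admissible P X z \<xi>" "\<omega> \<in> space P" "0 \<le> s" "s \<le> t" for \<xi> z \<omega> s t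
    using that unfolding admissible_def by blast
  have adm_nn: "0 \<le> \<xi> t \<omega>" if "admissible P X z \<xi>" "\<omega> \<in> space P" "0 \<le> t" for \<xi> z \<omega> t
    using that unfolding admissible_def by blast
  have adm_pc: "pc (\<lambda>r. \<xi> r \<omega>) (jump_times (\<lambda>r. X r \<omega>) \<inter> {0<..T}) T"
    if adm: "admissible P X z \<xi>" and \<omega>: "\<omega> \<in> space P" and fin: "finite (jump_times (\<lambda>r. X r \<omega>) \<inter> {0<..T})" for \<xi> z \<omega>
    unfolding pc_def
  proof (intro conjI allI impI)
    show "finite (jump_times (\<lambda>r. X r \<omega>) \<inter> {0<..T})" by (rule fin)
    fix u v assume uv: "0 \<le> u" "u \<le> v" "v \<le> T" "{u<..v} \<inter> (jump_times (\<lambda>r. X r \<omega>) \<inter> {0<..T}) = {}"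
    have "{u<..v} \<inter> jump_times (\<lambda>r. X r \<omega>) = {}" using uv by auto
    then show "\<xi> v \<omega> = \<xi> u \<omega>" using adm \<omega> uv(1,2) unfolding admissible_def by blast
  qed
  have costm: "(\<lambda>\<omega>. exec_cost X F T \<xi> \<omega>) \<in> borel_measurable C" if adm: "admissible P X z \<xi>" for \<xi> z
  proof -
    define E where "E n \<omega> = (\<Sum>k<2^n. if X (real (Suc k) * T / 2^n) \<omega> \<noteq> X (real k * T / 2^n) \<omega>
       then F' (\<xi> (real k * T / 2^n) \<omega> - \<xi> (real (Suc k) * T / 2^n) \<omega>) else 0) + F' (\<xi> T \<omega>)" for n \<omega>
    have Em: "E n \<in> borel_measurable C" for n
    proof -
      have [measurable]: "X (real k * T / 2^n) \<in> borel_measurable C" for k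
        by (rule Xm) (use assms(14) in simp)
      have [measurable]: "\<xi> (real k * T / 2^n) \<in> borel_measurable C" for k
        by (rule xim[OF adm]) (use assms(14) in simp)
      have [measurable]: "\<xi> T \<in> borel_measurable C" by (rule xim[OF adm assms(14)])
      show ?thesis unfolding E_def by measurable
    qed
    have ae: "AE \<omega> in P. exec_cost X F T \<xi> \<omega> = lim (\<lambda>n. E n \<omega>)"
      using goodX AE_space
    proof eventually_elim
      case (elim \<omega>)
      have pcX: "pc (\<lambda>r. X r \<omega>) (jump_times (\<lambda>r. X r \<omega>) \<inter> {0<..T}) T" using elim(1) assms(14) by blast
      have pcx: "pc (\<lambda>r. \<xi> r \<omega>) (jump_times (\<lambda>r. X r \<omega>) \<inter> {0<..T}) T"
        by (rule adm_pc[OF adm elim(2) pc_fin[OF pcX]])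
      have ev: "\<forall>\<^sub>F n in sequentially. (\<Sum>k<2^n. if X (real (Suc k) * T / 2^n) \<omega> \<noteq> X (real k * T / 2^n) \<omega>
         then F (max 0 (\<xi> (real k * T / 2^n) \<omega> - \<xi> (real (Suc k) * T / 2^n) \<omega>)) else 0)
         = (\<Sum>s\<in>jump_times (\<lambda>r. X r \<omega>) \<inter> {0<..T}. F (left_lim (\<lambda>r. \<xi> r \<omega>) s - \<xi> s \<omega>))"
        by (rule cost_dyadic[OF pcX refl assms(14) pcx adm_mono[OF adm elim(2)]])
      have FT: "F (max 0 (\<xi> T \<omega>)) = F (\<xi> T \<omega>)" using adm_nn[OF adm elim(2) assms(14)] by simp
      have "\<forall>\<^sub>F n in sequentially. E n \<omega> = exec_cost X F T \<xi> \<omega>"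
        using ev by eventually_elim (simp only: E_def F'_def FT exec_cost_def)
      then have "(\<lambda>n. E n \<omega>) \<longlonglongrightarrow> exec_cost X F T \<xi> \<omega>" by (rule tendsto_eventually)
      then show ?case by (simp add: limI)
    qed
    have "(\<lambda>\<omega>. lim (\<lambda>n. E n \<omega>)) \<in> borel_measurable C" by (rule borel_measurable_lim_metric) (rule Em)
    moreover have "AE \<omega> in C. exec_cost X F T \<xi> \<omega> = lim (\<lambda>n. E n \<omega>)" unfolding C_def by (rule AE_completion[OF ae])
    ultimately show ?thesis by (rule complete_measurable_AE[OF cmC])
  qed
  have constadm: "admissible P X z (\<lambda>t \<omega>. z)" if "0 \<le> z" for z
    unfolding admissible_def using that by auto
  have costs_nn: "0 \<le> exec_cost X F T \<xi> \<omega>"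
    if adm: "admissible P X z \<xi>" and \<omega>: "\<omega> \<in> space P"
      and pcX: "pc (\<lambda>r. X r \<omega>) (jump_times (\<lambda>r. X r \<omega>) \<inter> {0<..T}) T" for \<xi> z \<omega>
    unfolding exec_cost_def
    by (rule cost_nonneg[OF adm_pc[OF adm \<omega> pc_fin[OF pcX]] _ assms(14) adm_mono[OF adm \<omega>] adm_nn[OF adm \<omega>] assms(11)]) auto
  show ?thesis
  proof (intro allI impI)
    fix x y a :: real assume xy: "0 \<le> x" "0 \<le> y" "0 \<le> a" "a \<le> 1"
    define SX where "SX = {\<xi>. admissible P X x \<xi>}"
    define SY where "SY = {\<xi>. admissible P X y \<xi>}"
    have SXne: "SX \<noteq> {}" unfolding SX_def using constadm[OF xy(1)] by blast
    have SYne: "SY \<noteq> {}" unfolding SY_def using constadm[OF xy(2)] by blast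
    have main: "value_fn P X F T (a * x + (1 - a) * y)
        \<le> ennreal a * (\<integral>\<^sup>+ \<omega>. ennreal (exec_cost X F T \<xi> \<omega>) \<partial>P) + ennreal (1 - a) * (\<integral>\<^sup>+ \<omega>. ennreal (exec_cost X F T \<eta> \<omega>) \<partial>P)"
      if \<xi>: "\<xi> \<in> SX" and \<eta>: "\<eta> \<in> SY" for \<xi> \<eta>
    proof -
      have ax: "admissible P X x \<xi>" using \<xi> by (simp add: SX_def)
      have ay: "admissible P X y \<eta>" using \<eta> by (simp add: SY_def)
      define \<zeta> where "\<zeta> = (\<lambda>t \<omega>. a * \<xi> t \<omega> + (1 - a) * \<eta> t \<omega>)"
      have adm\<zeta>: "admissible P X (a * x + (1 - a) * y) \<zeta>"
        unfolding \<zeta>_def by (rule admissible_comb[OF ax ay xy(3,4)])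
      have m1[measurable]: "(\<lambda>\<omega>. exec_cost X F T \<xi> \<omega>) \<in> borel_measurable C" by (rule costm[OF ax])
      have m2[measurable]: "(\<lambda>\<omega>. exec_cost X F T \<eta> \<omega>) \<in> borel_measurable C" by (rule costm[OF ay])
      have "value_fn P X F T (a * x + (1 - a) * y) \<le> (\<integral>\<^sup>+ \<omega>. ennreal (exec_cost X F T \<zeta> \<omega>) \<partial>P)"
        unfolding value_fn_def by (rule INF_lower) (simp add: adm\<zeta>)
      also have "\<dots> = (\<integral>\<^sup>+ \<omega>. ennreal (exec_cost X F T \<zeta> \<omega>) \<partial>C)"
        unfolding C_def by (rule nn_integral_completion[symmetric])
      also have "\<dots> \<le> (\<integral>\<^sup>+ \<omega>. ennreal a * ennreal (exec_cost X F T \<xi> \<omega>) + ennreal (1 - a) * ennreal (exec_cost X F T \<eta> \<omega>) \<partial>C)"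
      proof (rule nn_integral_mono_AE)
        have "AE \<omega> in P. ennreal (exec_cost X F T \<zeta> \<omega>) \<le> ennreal a * ennreal (exec_cost X F T \<xi> \<omega>) + ennreal (1 - a) * ennreal (exec_cost X F T \<eta> \<omega>)"
          using goodX AE_space
        proof eventually_elim
          case (elim \<omega>)
          have pcX: "pc (\<lambda>r. X r \<omega>) (jump_times (\<lambda>r. X r \<omega>) \<inter> {0<..T}) T" using elim(1) assms(14) by blast
          have fin: "finite (jump_times (\<lambda>r. X r \<omega>) \<inter> {0<..T})" by (rule pc_fin[OF pcX])
          have ineq: "exec_cost X F T \<zeta> \<omega> \<le> a * exec_cost X F T \<xi> \<omega> + (1 - a) * exec_cost X F T \<eta> \<omega>"
            unfolding exec_cost_def \<zeta>_def
            by (rule cost_convex[OF adm_pc[OF ax elim(2) fin] adm_pc[OF ay elim(2) fin] _ assms(14)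
                  adm_mono[OF ax elim(2)] adm_mono[OF ay elim(2)] adm_nn[OF ax elim(2)] adm_nn[OF ay elim(2)] assms(13) xy(3,4)]) auto
          have n1: "0 \<le> exec_cost X F T \<xi> \<omega>" by (rule costs_nn[OF ax elim(2) pcX])
          have n2: "0 \<le> exec_cost X F T \<eta> \<omega>" by (rule costs_nn[OF ay elim(2) pcX])
          have "ennreal (exec_cost X F T \<zeta> \<omega>) \<le> ennreal (a * exec_cost X F T \<xi> \<omega> + (1 - a) * exec_cost X F T \<eta> \<omega>)"
            using ineq by (rule ennreal_leI)
          also have "\<dots> = ennreal a * ennreal (exec_cost X F T \<xi> \<omega>) + ennreal (1 - a) * ennreal (exec_cost X F T \<eta> \<omega>)"
            using n1 n2 xy(3,4) by (simp add: ennreal_plus ennreal_mult)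
          finally show ?case .
        qed
        then show "AE \<omega> in C. ennreal (exec_cost X F T \<zeta> \<omega>) \<le> ennreal a * ennreal (exec_cost X F T \<xi> \<omega>) + ennreal (1 - a) * ennreal (exec_cost X F T \<eta> \<omega>)"
          unfolding C_def by (rule AE_completion)
      qed
      also have "\<dots> = ennreal a * (\<integral>\<^sup>+ \<omega>. ennreal (exec_cost X F T \<xi> \<omega>) \<partial>C) + ennreal (1 - a) * (\<integral>\<^sup>+ \<omega>. ennreal (exec_cost X F T \<eta> \<omega>) \<partial>C)"
        by (subst nn_integral_add) (simp_all add: nn_integral_cmult)
      also have "\<dots> = ennreal a * (\<integral>\<^sup>+ \<omega>. ennreal (exec_cost X F T \<xi> \<omega>) \<partial>P) + ennreal (1 - a) * (\<integral>\<^sup>+ \<omega>. ennreal (exec_cost X F T \<eta> \<omega>) \<partial>P)"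
        unfolding C_def nn_integral_completion ..
      finally show ?thesis .
    qed
    have "value_fn P X F T (a * x + (1 - a) * y)
        \<le> ennreal a * (INF \<xi>\<in>SX. \<integral>\<^sup>+ \<omega>. ennreal (exec_cost X F T \<xi> \<omega>) \<partial>P)
          + ennreal (1 - a) * (INF \<eta>\<in>SY. \<integral>\<^sup>+ \<omega>. ennreal (exec_cost X F T \<eta> \<omega>) \<partial>P)"
      by (rule inf_comb[OF SXne SYne main])
    then show "value_fn P (observed M Nc) F T (a * x + (1 - a) * y)
             \<le> ennreal a * value_fn P (observed M Nc) F T x
               + ennreal (1 - a) * value_fn P (observed M Nc) F T y"
      unfolding value_fn_def SX_def SY_def X_def .
  qed
qed

end
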